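(* For every integer $k\ge 0$, every integer $n\ge 1$ and every real $x$, $$W^{(k)}_{n}(x)=(-2)^{\frac{n(n-1)}{2}}\,\sin^{\frac{n(n+1)}{2}}(x)\,G(n+1)\,C^{(n)}_{k}(\cos x).$$
   Context: For smooth functions $f_1,\dots,f_n$ of a real variable $x$, $\mathrm{Wr}\{f_1,\dots,f_n\}$ denotes the Wronskian, i.e. the determinant of the $n\times n$ matrix whose $(i,j)$ entry is $f_j^{(i-1)}(x)$, $i,j=1,\dots,n$. Define $W^{(k)}_1(x):=\sin((k+1)x)$ and, for $n\ge 2$, $W^{(k)}_n(x):=\mathrm{Wr}\{\sin(x),\sin(2x),\dots,\sin((n-1)x),\sin((n+k)x)\}$. Here $G(n+1)=\prod_{j=0}^{n-1}j!$ (Barnes $G$-function at a positive integer), and $C^{(\lambda)}_k$ is the Gegenbauer polynomial, defined by $(1-2tz+z^2)^{-\lambda}=\sum_{k\ge0}C^{(\lambda)}_k(t)z^k$. *)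

theory Defs
  imports "HOL-Analysis.Analysis" "HOL-Computational_Algebra.Formal_Power_Series"
begin

definition det_n :: "nat \<Rightarrow> (nat \<Rightarrow> nat \<Rightarrow> real) \<Rightarrow> real" where
  "det_n n M = (\<Sum>p | p permutes {..<n}. of_int (sign p) * (\<Prod>i<n. M i (p i)))"

definition wronskian :: "nat \<Rightarrow> (nat \<Rightarrow> real \<Rightarrow> real) \<Rightarrow> real \<Rightarrow> real" where
  "wronskian n f x = det_n n (\<lambda>i j. (deriv ^^ i) (f j) x)"

definition W :: "nat \<Rightarrow> nat \<Rightarrow> real \<Rightarrow> real" where
  "W k n x = (if n = 1 then sin (real (k + 1) * x)
     else wronskian n (\<lambda>j t. if j + 1 < n then sin (real (j + 1) * t) else sin (real (n + k) * t)) x)"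

text \<open>Barnes G at a positive integer: G(m) = prod_{j=0}^{m-2} j!, so G(n+1) = prod_{j<n} j!.\<close>
definition barnes_G :: "nat \<Rightarrow> real" where
  "barnes_G m = (\<Prod>j<m - 1. fact j)"

definition gegenbauer :: "nat \<Rightarrow> nat \<Rightarrow> real \<Rightarrow> real" where
  "gegenbauer lam k t = fps_nth (inverse ((1 - fps_const (2 * t) * fps_X + fps_X ^ 2) ^ lam)) k"

end

theory Submission
  imports Defs "Jordan_Normal_Form.Determinant"
begin


lemma det_n_eq: "det_n n M = Determinant.det (mat n n (\<lambda>(i,j). M i j))"
  unfolding det_n_def Determinant.det_def by (auto simp: atLeast0LessThan intro!: sum.cong prod.cong)

lemma det_n_upper:
  assumes "\<And>i j. j < i \<Longrightarrow> i < n \<Longrightarrow> N i j = 0"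
  shows "det_n n N = (\<Prod>i<n. N i i)"
proof -
  have "det_n n N = prod_list (diag_mat (mat n n (\<lambda>(i,j). N i j)))"
    unfolding det_n_eq
    by (rule det_upper_triangular[of _ n]) (auto simp: upper_triangular_def assms)
  also have "\<dots> = (\<Prod>i<n. N i i)"
    by (simp add: prod_list_diag_prod atLeast0LessThan)
  finally show ?thesis .
qed

lemma det_n_tri:
  assumes "\<And>i j. i < n \<Longrightarrow> j < n \<Longrightarrow> M i j = (\<Sum>l\<le>i. T i l * N l j)"
  shows "det_n n M = (\<Prod>i<n. T i i) * det_n n N"
proof -
  define T' where "T' = (\<lambda>i l. if l \<le> i then T i l else 0)"
  have eq: "mat n n (\<lambda>(i,j). M i j) = mat n n (\<lambda>(i,j). T' i j) * mat n n (\<lambda>(i,j). N i j)"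
  proof (rule eq_matI)
    fix i j assume ij: "i < dim_row (mat n n (\<lambda>(i,j). T' i j) * mat n n (\<lambda>(i,j). N i j))"
       "j < dim_col (mat n n (\<lambda>(i,j). T' i j) * mat n n (\<lambda>(i,j). N i j))"
    hence i: "i < n" and j: "j < n" by auto
    have "(\<Sum>l\<in>{0..<n}. T' i l * N l j) = (\<Sum>l\<in>{..i}. T i l * N l j)"
    proof -
      have "(\<Sum>l\<in>{0..<n}. T' i l * N l j) = (\<Sum>l\<in>{0..<n}. if l \<in> {..i} then T i l * N l j else 0)"
        by (auto simp: T'_def intro!: sum.cong)
      also have "\<dots> = (\<Sum>l\<in>{0..<n} \<inter> {..i}. T i l * N l j)"
        by (simp add: sum.inter_restrict)
      also have "{0..<n} \<inter> {..i} = {..i}" using i by auto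
      finally show ?thesis .
    qed
    then show "mat n n (\<lambda>(i,j). M i j) $$ (i, j) = (mat n n (\<lambda>(i,j). T' i j) * mat n n (\<lambda>(i,j). N i j)) $$ (i, j)"
      using i j assms[OF i j] by (simp add: scalar_prod_def)
  qed auto
  have "Determinant.det (mat n n (\<lambda>(i,j). T' i j)) = prod_list (diag_mat (mat n n (\<lambda>(i,j). T' i j)))"
    by (rule det_lower_triangular[of n]) (auto simp: T'_def)
  also have "\<dots> = (\<Prod>i<n. T i i)"
    by (simp add: prod_list_diag_prod atLeast0LessThan T'_def)
  finally have dT: "Determinant.det (mat n n (\<lambda>(i,j). T' i j)) = (\<Prod>i<n. T i i)" .
  show ?thesis unfolding det_n_eq eq
    by (subst det_mult[of _ n]) (auto simp: dT)
qed


fun pp :: "nat \<Rightarrow> nat \<Rightarrow> real poly" where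
  "pp 0 k = (if k = 0 then 1 else 0)"
| "pp (Suc l) 0 = pp l 0"
| "pp (Suc l) (Suc 0) = pp l 1 + [:0,2:] * pp (Suc l) 0"
| "pp (Suc l) (Suc (Suc k)) = pp l (Suc (Suc k)) + [:0,2:] * pp (Suc l) (Suc k) - pp (Suc l) k"

lemma pp_0 [simp]: "pp l 0 = 1"
  by (induction l) auto

lemma pderiv_pp: "pderiv (pp l m) = (if m = 0 then 0 else Polynomial.smult (2 * real l) (pp (Suc l) (m - 1)))"
proof (induction l m rule: pp.induct)
  case (1 k) then show ?case by (auto simp: pderiv_pCons)
next
  case (2 l) then show ?case by simp
next
  case (3 l) then show ?case by (simp add: pderiv_add pderiv_pCons)
next
  case (4 l k)
  have "pderiv (pp (Suc l) (Suc (Suc k))) = pderiv (pp l (Suc (Suc k))) + [:2:] * pp (Suc l) (Suc k)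
     + [:0,2:] * pderiv (pp (Suc l) (Suc k)) - pderiv (pp (Suc l) k)"
    by (simp only: pp.simps(4) pderiv_add pderiv_diff pderiv_mult) (simp add: pderiv_pCons)
  also have "\<dots> = Polynomial.smult (2 * real l) (pp (Suc l) (Suc k)) + [:2:] * pp (Suc l) (Suc k)
     + [:0,2:] * Polynomial.smult (2 * real (Suc l)) (pp (Suc (Suc l)) k)
     - (if k = 0 then 0 else Polynomial.smult (2 * real (Suc l)) (pp (Suc (Suc l)) (k - 1)))"
    using 4 by (simp del: pp.simps)
  also have "\<dots> = Polynomial.smult (2 * real (Suc l)) (pp (Suc (Suc l)) (Suc k))"
  proof (cases k)
    case 0
    have e: "pp (Suc (Suc l)) (Suc 0) = pp (Suc l) 1 + [:0,2:] * pp (Suc (Suc l)) 0" by (rule pp.simps(3))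
    show ?thesis unfolding 0 e
      by (simp del: pp.simps flip: poly_eq_poly_eq_iff) (auto simp: fun_eq_iff algebra_simps)
  next
    case (Suc k')
    have e: "pp (Suc (Suc l)) (Suc (Suc k')) = pp (Suc l) (Suc (Suc k')) + [:0,2:] * pp (Suc (Suc l)) (Suc k') - pp (Suc (Suc l)) k'" by (rule pp.simps(4))
    show ?thesis unfolding Suc e
      by (simp del: pp.simps flip: poly_eq_poly_eq_iff) (auto simp: fun_eq_iff algebra_simps)
  qed
  finally show ?case by simp
qed

lemma pderiv_pow_pp:
  "(pderiv ^^ m) (pp l k) = (if m \<le> k then Polynomial.smult (\<Prod>i<m. 2 * real (l + i)) (pp (l + m) (k - m)) else 0)"
proof (induction m)
  case 0 then show ?case by simp
next
  case (Suc m)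
  show ?case
  proof (cases "Suc m \<le> k")
    case True
    then show ?thesis using Suc by (simp add: pderiv_smult pderiv_pp Suc_diff_Suc mult_ac)
  next
    case False
    then show ?thesis using Suc by (auto simp: pderiv_smult pderiv_pp pderiv_0 intro: le_antisym)
  qed
qed

lemma prod_2_fact: "(\<Prod>i<m. 2 * real (1 + i)) = 2 ^ m * fact m"
  by (induction m) (auto simp: algebra_simps)

definition GF :: "real \<Rightarrow> nat \<Rightarrow> real fps" where
  "GF t l = inverse ((1 - fps_const (2 * t) * fps_X + fps_X ^ 2) ^ l)"

lemma GF_rec: "GF t l = (1 - fps_const (2 * t) * fps_X + fps_X ^ 2) * GF t (Suc l)"
proof -
  define A :: "real fps" where "A = 1 - fps_const (2 * t) * fps_X + fps_X ^ 2"
  have A0: "fps_nth A 0 = 1" by (simp add: A_def)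
  have "A * GF t (Suc l) = A * (inverse A * inverse (A ^ l))"
    by (simp add: GF_def A_def[symmetric] fps_inverse_mult)
  also have "\<dots> = (A * inverse A) * inverse (A ^ l)" by (simp add: mult.assoc)
  also have "\<dots> = GF t l" using A0 by (simp add: inverse_mult_eq_1' GF_def A_def)
  finally show ?thesis by (simp add: A_def)
qed

lemma GF_nth_rec: "fps_nth (GF t l) m = fps_nth (GF t (Suc l)) m
   - (if m = 0 then 0 else 2 * t * fps_nth (GF t (Suc l)) (m - 1))
   + (if m < 2 then 0 else fps_nth (GF t (Suc l)) (m - 2))"
proof -
  have "GF t l = GF t (Suc l) - fps_const (2 * t) * (fps_X * GF t (Suc l)) + fps_X ^ 2 * GF t (Suc l)"
    by (subst GF_rec) (simp add: algebra_simps)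
  then show ?thesis
    by (simp add: fps_X_mult_nth fps_X_power_mult_nth fps_mult_left_const_nth)
qed

lemma pp_gegenbauer: "poly (pp l k) t = fps_nth (GF t l) k"
proof (induction l k rule: pp.induct)
  case (1 k) then show ?case by (simp add: GF_def)
next
  case (2 l) then show ?case using GF_nth_rec[of t l 0] by simp
next
  case (3 l) then show ?case using GF_nth_rec[of t l 1] by simp
next
  case (4 l k) then show ?case using GF_nth_rec[of t l "Suc (Suc k)"] by simp
qed

lemma gegenbauer_pp: "gegenbauer l k t = poly (pp l k) t"
  by (simp add: pp_gegenbauer gegenbauer_def GF_def)

lemma sin_pp: "sin (real (Suc m) * x) = sin x * poly (pp 1 m) (cos x)"
proof -
  have "sin (real (Suc m) * x) = sin x * poly (pp 1 m) (cos x) \<and>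
        sin (real (Suc (Suc m)) * x) = sin x * poly (pp 1 (Suc m)) (cos x)"
  proof (induction m)
    case 0
    then show ?case by (simp add: sin_double)
  next
    case (Suc m)
    have a: "sin (real (Suc (Suc (Suc m))) * x) = sin (real (Suc (Suc m)) * x + x)"
      by (simp add: algebra_simps)
    have b: "sin (real (Suc m) * x) = sin (real (Suc (Suc m)) * x - x)"
      by (simp add: algebra_simps)
    have c: "sin (real (Suc (Suc (Suc m))) * x) = 2 * cos x * sin (real (Suc (Suc m)) * x) - sin (real (Suc m) * x)"
      unfolding a b sin_add sin_diff by (simp add: algebra_simps)
    show ?case using Suc c by (simp add: algebra_simps)
  qed
  then show ?thesis by simp
qed


definition TC :: "(real \<Rightarrow> real) \<Rightarrow> bool" where
  "TC f \<longleftrightarrow> (\<exists>P Q. f = (\<lambda>x. poly P (cos x) + sin x * poly Q (cos x)))"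

lemma trig_aux: "cos x * (cos x * a) + sin x * (sin x * a) = (a::real)"
  by (metis distrib_right mult.assoc mult_1 sin_cos_squared_add3)

lemma TC_has_deriv:
  assumes "TC f"
  obtains f' where "\<And>x. (f has_real_derivative f' x) (at x)" "TC f'"
proof -
  obtain P Q where f: "f = (\<lambda>x. poly P (cos x) + sin x * poly Q (cos x))" using assms TC_def by blast
  define f' where "f' = (\<lambda>x. poly ([:0,1:] * Q - [:1,0,-1:] * pderiv Q) (cos x) + sin x * poly (- pderiv P) (cos x))"
  have "(f has_real_derivative f' x) (at x)" for x
  proof -
    have "(f has_real_derivative (poly (pderiv P) (cos x) * (- sin x) + (cos x * poly Q (cos x) + sin x * (poly (pderiv Q) (cos x) * (- sin x))))) (at x)"
      unfolding f by (auto intro!: derivative_eq_intros DERIV_chain2[OF poly_DERIV])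
    moreover have "poly (pderiv P) (cos x) * (- sin x) + (cos x * poly Q (cos x) + sin x * (poly (pderiv Q) (cos x) * (- sin x))) = f' x"
      by (simp add: f'_def algebra_simps power2_eq_square trig_aux)
    ultimately show ?thesis by simp
  qed
  moreover have "TC f'" unfolding TC_def f'_def by blast
  ultimately show ?thesis using that by blast
qed

lemma TC_deriv: "TC f \<Longrightarrow> TC (deriv f)"
  by (metis (no_types, lifting) DERIV_imp_deriv TC_has_deriv ext)

lemma TC_DERIV: "TC f \<Longrightarrow> (f has_real_derivative deriv f x) (at x)"
  by (metis DERIV_imp_deriv TC_has_deriv)

lemma TC_add: "TC f \<Longrightarrow> TC g \<Longrightarrow> TC (\<lambda>x. f x + g x)"
proof -
  assume "TC f" "TC g"
  then obtain P Q P2 Q2 where "f = (\<lambda>x. poly P (cos x) + sin x * poly Q (cos x))"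
    "g = (\<lambda>x. poly P2 (cos x) + sin x * poly Q2 (cos x))" unfolding TC_def by blast
  then have "(\<lambda>x. f x + g x) = (\<lambda>x. poly (P + P2) (cos x) + sin x * poly (Q + Q2) (cos x))"
    by (auto simp: algebra_simps)
  then show ?thesis unfolding TC_def by blast
qed

lemma TC_mult: "TC f \<Longrightarrow> TC g \<Longrightarrow> TC (\<lambda>x. f x * g x)"
proof -
  assume "TC f" "TC g"
  then obtain P Q P2 Q2 where fg: "f = (\<lambda>x. poly P (cos x) + sin x * poly Q (cos x))"
    "g = (\<lambda>x. poly P2 (cos x) + sin x * poly Q2 (cos x))" unfolding TC_def by blast
  have "(\<lambda>x. f x * g x) = (\<lambda>x. poly (P * P2 + [:1,0,-1:] * Q * Q2) (cos x) + sin x * poly (P * Q2 + Q * P2) (cos x))"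
  proof
    fix x
    show "f x * g x = poly (P * P2 + [:1,0,-1:] * Q * Q2) (cos x) + sin x * poly (P * Q2 + Q * P2) (cos x)"
      unfolding fg by (simp add: algebra_simps power2_eq_square trig_aux)
  qed
  then show ?thesis unfolding TC_def by blast
qed

lemma TC_const: "TC (\<lambda>x. c)"
  unfolding TC_def by (rule exI[of _ "[:c:]"], rule exI[of _ 0]) simp

lemma TC_sin: "TC sin"
  unfolding TC_def by (rule exI[of _ 0], rule exI[of _ 1]) simp

lemma TC_msin: "TC (\<lambda>x. - sin x)"
  unfolding TC_def by (rule exI[of _ 0], rule exI[of _ "[:-1:]"]) simp

lemma key:
  "\<exists>b. (\<forall>l. TC (b l)) \<and> (\<forall>x. b i x = sin x * (- sin x) ^ i) \<and>
     (\<forall>P x. (deriv ^^ i) (\<lambda>x. sin x * poly P (cos x)) x = (\<Sum>l\<le>i. b l x * poly ((pderiv ^^ l) P) (cos x)))"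
proof (induction i)
  case 0
  show ?case by (rule exI[of _ "\<lambda>l. sin"]) (simp add: TC_sin)
next
  case (Suc i)
  then obtain b where bT: "\<And>l. TC (b l)" and bi: "\<And>x. b i x = sin x * (- sin x) ^ i"
    and bd: "\<And>P x. (deriv ^^ i) (\<lambda>x. sin x * poly P (cos x)) x = (\<Sum>l\<le>i. b l x * poly ((pderiv ^^ l) P) (cos x))"
    by blast
  define b' where "b' = (\<lambda>l x. (if l \<le> i then deriv (b l) x else 0) + (if l = 0 then 0 else b (l - 1) x * (- sin x)))"
  have T': "TC (b' l)" for l
  proof -
    have "TC (\<lambda>x. if l \<le> i then deriv (b l) x else 0)"
      by (cases "l \<le> i") (auto simp: TC_deriv bT TC_const)
    moreover have "TC (\<lambda>x. if l = 0 then 0 else b (l - 1) x * (- sin x))"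
    proof (cases "l = 0")
      case True then show ?thesis by (simp add: TC_const)
    next
      case False
      have "TC (\<lambda>x. b (l - 1) x * (- sin x))" by (rule TC_mult[OF bT TC_msin])
      moreover have "(\<lambda>x. if l = 0 then 0 else b (l - 1) x * (- sin x)) = (\<lambda>x. b (l - 1) x * (- sin x))"
        using False by simp
      ultimately show ?thesis by simp
    qed
    ultimately show ?thesis unfolding b'_def by (rule TC_add)
  qed
  have d: "(deriv ^^ Suc i) (\<lambda>x. sin x * poly P (cos x)) x = (\<Sum>l\<le>Suc i. b' l x * poly ((pderiv ^^ l) P) (cos x))" for P x
  proof -
    have e: "(deriv ^^ i) (\<lambda>x. sin x * poly P (cos x)) = (\<lambda>x. \<Sum>l\<le>i. b l x * poly ((pderiv ^^ l) P) (cos x))"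
      using bd by blast
    have "((\<lambda>x. \<Sum>l\<le>i. b l x * poly ((pderiv ^^ l) P) (cos x)) has_real_derivative
       (\<Sum>l\<le>i. deriv (b l) x * poly ((pderiv ^^ l) P) (cos x) + b l x * (poly ((pderiv ^^ Suc l) P) (cos x) * (- sin x)))) (at x)"
      by (auto intro!: derivative_eq_intros DERIV_chain2[OF poly_DERIV] TC_DERIV bT sum.cong simp: algebra_simps)
    then have "(deriv ^^ Suc i) (\<lambda>x. sin x * poly P (cos x)) x =
        (\<Sum>l\<le>i. deriv (b l) x * poly ((pderiv ^^ l) P) (cos x) + b l x * (poly ((pderiv ^^ Suc l) P) (cos x) * (- sin x)))"
      using e by (simp add: DERIV_imp_deriv)
    also have "\<dots> = (\<Sum>l\<le>i. deriv (b l) x * poly ((pderiv ^^ l) P) (cos x)) +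
         (\<Sum>l\<le>i. b l x * (- sin x) * poly ((pderiv ^^ Suc l) P) (cos x))"
      unfolding sum.distrib[symmetric] by (rule sum.cong) (simp_all add: algebra_simps)
    also have "\<dots> = (\<Sum>l\<le>Suc i. (if l \<le> i then deriv (b l) x else 0) * poly ((pderiv ^^ l) P) (cos x)) +
         (\<Sum>l\<le>Suc i. (if l = 0 then 0 else b (l - 1) x * (- sin x)) * poly ((pderiv ^^ l) P) (cos x))"
    proof -
      have s1: "(\<Sum>l\<le>Suc i. (if l \<le> i then deriv (b l) x else 0) * poly ((pderiv ^^ l) P) (cos x))
         = (\<Sum>l\<le>i. deriv (b l) x * poly ((pderiv ^^ l) P) (cos x))"
        by (subst sum.atMost_Suc) (auto intro!: sum.cong)
      have s2: "(\<Sum>l\<le>Suc i. (if l = 0 then 0 else b (l - 1) x * (- sin x)) * poly ((pderiv ^^ l) P) (cos x))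
         = (\<Sum>l\<le>i. b l x * (- sin x) * poly ((pderiv ^^ Suc l) P) (cos x))"
        by (subst sum.atMost_Suc_shift) simp
      show ?thesis unfolding s1 s2 ..
    qed
    also have "\<dots> = (\<Sum>l\<le>Suc i. b' l x * poly ((pderiv ^^ l) P) (cos x))"
      by (simp add: b'_def sum.distrib algebra_simps)
    finally show ?thesis .
  qed
  have "b' (Suc i) x = sin x * (- sin x) ^ Suc i" for x
    by (simp add: b'_def bi)
  then show ?case using T' d by blast
qed


lemma sum_lessThan_id: "(\<Sum>i<(n::nat). i) = n * (n - 1) div 2"
proof -
  have "2 * (\<Sum>i<n. i) = n * (n - 1)"
  proof (induction n)
    case (Suc n) then show ?case by (cases n) (auto simp: algebra_simps)
  qed simp
  then show ?thesis by simp
qed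

lemma tri_exp: "(n::nat) + n * (n - 1) div 2 = n * (n + 1) div (2::nat)"
proof -
  have "n * (n + 1) = n * (n - 1) + 2 * n" by (cases n) (auto simp: algebra_simps)
  then show ?thesis by simp
qed

theorem theorem1:
  fixes k n :: nat and x :: real
  assumes "n \<ge> 1"
  shows "W k n x = (-2) ^ (n * (n - 1) div 2) * sin x ^ (n * (n + 1) div 2)
                   * barnes_G (n + 1) * gegenbauer n k (cos x)"
proof -
  have "\<forall>i. \<exists>b. (\<forall>l. TC (b l)) \<and> (\<forall>x. b i x = sin x * (- sin x) ^ i) \<and>
     (\<forall>P x. (deriv ^^ i) (\<lambda>x. sin x * poly P (cos x)) x = (\<Sum>l\<le>i. b l x * poly ((pderiv ^^ l) P) (cos x)))"
    using key by (intro allI) (rule key)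
  from choice[OF this] obtain B where B: "\<forall>i. (\<forall>l. TC (B i l)) \<and> (\<forall>x. B i i x = sin x * (- sin x) ^ i) \<and>
     (\<forall>P x. (deriv ^^ i) (\<lambda>x. sin x * poly P (cos x)) x = (\<Sum>l\<le>i. B i l x * poly ((pderiv ^^ l) P) (cos x)))"
    ..
  have Bd: "\<And>i. B i i x = sin x * (- sin x) ^ i" and
    Bs: "\<And>i P. (deriv ^^ i) (\<lambda>x. sin x * poly P (cos x)) x = (\<Sum>l\<le>i. B i l x * poly ((pderiv ^^ l) P) (cos x))"
    using B by blast+
  define f where "f = (\<lambda>j t. if j + 1 < n then sin (real (j + 1) * t) else sin (real (n + k) * t))"
  define P where "P = (\<lambda>j. if j + 1 < n then pp 1 j else pp 1 (n + k - 1))"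
  have fP: "f j = (\<lambda>t. sin t * poly (P j) (cos t))" for j
  proof
    fix t
    have "real (n + k) = real (Suc (n + k - 1))" using assms by simp
    then show "f j t = sin t * poly (P j) (cos t)"
      unfolding f_def P_def using sin_pp[of j t] sin_pp[of "n + k - 1" t] by (auto simp del: of_nat_Suc)
  qed
  define N where "N = (\<lambda>l j. poly ((pderiv ^^ l) (P j)) (cos x))"
  have WW: "W k n x = wronskian n f x"
  proof (cases "n = 1")
    case True
    have "wronskian n f x = f 0 x"
      unfolding wronskian_def True by (subst det_n_upper) auto
    then show ?thesis using True by (simp add: W_def f_def)
  next
    case False then show ?thesis by (simp add: W_def f_def)
  qed
  have "wronskian n f x = (\<Prod>i<n. B i i x) * det_n n N"
    unfolding wronskian_def
  proof (rule det_n_tri[where T="\<lambda>i l. B i l x" and N=N])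
    fix i j assume "i < n" "j < n"
    show "(deriv ^^ i) (f j) x = (\<Sum>l\<le>i. B i l x * N l j)"
      unfolding fP N_def by (rule Bs)
  qed
  also have "(\<Prod>i<n. B i i x) = (\<Prod>i<n. sin x * (- sin x) ^ i)"
    by (simp add: Bd)
  also have "\<dots> = sin x ^ n * (- sin x) ^ (n * (n - 1) div 2)"
    by (simp add: prod.distrib power_sum[symmetric] sum_lessThan_id)
  also have "det_n n N = (\<Prod>l<n. N l l)"
  proof (rule det_n_upper)
    fix i j assume "j < i" "i < n"
    then show "N i j = 0" by (simp add: N_def P_def pderiv_pow_pp)
  qed
  also have "(\<Prod>l<n. N l l) = (\<Prod>l<n. 2 ^ l * fact l) * gegenbauer n k (cos x)"
  proof -
    obtain m where m: "n = Suc m" using assms by (cases n) auto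
    have "(\<Prod>l<m. N l l) = (\<Prod>l<m. 2 ^ l * fact l)"
      by (rule prod.cong) (auto simp: N_def P_def m pderiv_pow_pp prod_2_fact[simplified])
    moreover have "N m m = 2 ^ m * fact m * gegenbauer n k (cos x)"
      by (simp add: N_def P_def m pderiv_pow_pp prod_2_fact[simplified] gegenbauer_pp)
    ultimately show ?thesis by (simp add: m)
  qed
  also have "(\<Prod>l<n. 2 ^ l * fact l) = (2::real) ^ (n * (n - 1) div 2) * barnes_G (n + 1)"
    by (simp add: prod.distrib power_sum[symmetric] sum_lessThan_id barnes_G_def)
  finally have "W k n x = sin x ^ n * (- sin x) ^ (n * (n - 1) div 2) *
      ((2::real) ^ (n * (n - 1) div 2) * barnes_G (n + 1) * gegenbauer n k (cos x))"
    using WW by simp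
  also have "\<dots> = (-2) ^ (n * (n - 1) div 2) * sin x ^ (n + n * (n - 1) div 2)
                   * barnes_G (n + 1) * gegenbauer n k (cos x)"
  proof -
    have "(- sin x) ^ (n * (n - 1) div 2) * (2::real) ^ (n * (n - 1) div 2) = (-2) ^ (n * (n - 1) div 2) * sin x ^ (n * (n - 1) div 2)"
      by (simp add: power_mult_distrib[symmetric] mult.commute)
    then show ?thesis by (simp add: power_add mult_ac)
  qed
  also have "n + n * (n - 1) div 2 = n * (n + 1) div 2" by (rule tri_exp)
  finally show ?thesis .
qed


end
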